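(* Let $A$ be an associative (not necessarily unital) algebra over a field which satisfies the identity $x_1x_2\cdots x_n=x_nx_{n-1}\cdots x_1$. Then $A$ satisfies the identity $x_1\cdots x_{n+1}=x_{\tau(1)}\cdots x_{\tau(n+1)}$ for every even permutation $\tau\in S_{n+1}$.
   Context: An identity is satisfied by $A$ if it holds upon substituting arbitrary elements of $A$ for the variables. *)

theory Defs
  imports Complex_Main "HOL-Combinatorics.Permutations"
begin

text \<open>Product of a nonempty list in a (not necessarily unital) semigroup:
  lprod [x1,...,xn] = x1 * (x2 * ( ... * xn)). The empty product is left unspecified.\<close>
fun lprod :: "'a::semigroup_mult list \<Rightarrow> 'a" where
  "lprod [x] = x"
| "lprod (x # y # ys) = x * lprod (y # ys)"

text \<open>An associative (non-unital) algebra over a field 'k: the ring structure of 'a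
  (class ring, no unit required) plus a scalar multiplication making 'a a 'k-vector space
  such that multiplication is bilinear.\<close>
definition algebra_over :: "('k::field \<Rightarrow> 'a::ring \<Rightarrow> 'a) \<Rightarrow> bool" where
  "algebra_over smult \<longleftrightarrow> Vector_Spaces.vector_space smult \<and>
     (\<forall>c x y. smult c (x * y) = smult c x * y \<and> smult c (x * y) = x * smult c y)"

end

theory Submission
  imports Defs
begin

definition G :: "'a::semigroup_mult itself \<Rightarrow> nat \<Rightarrow> (nat \<Rightarrow> nat) \<Rightarrow> bool" where
  "G T n \<sigma> \<longleftrightarrow> (\<forall>x::nat\<Rightarrow>'a. lprod (map x [0..<n+1]) = lprod (map (x \<circ> \<sigma>) [0..<n+1]))"

lemma lprod_Cons: "ys \<noteq> [] \<Longrightarrow> lprod (a # ys) = a * lprod ys"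
  by (cases ys) auto

lemma lprod_merge: "lprod (xs @ (a * b) # ys) = lprod (xs @ a # b # ys)"
proof (induction xs)
  case Nil
  then show ?case by (cases ys) (auto simp: mult.assoc)
next
  case (Cons c xs)
  then show ?case by (simp add: lprod_Cons)
qed

lemma G_comp: "G T n \<sigma> \<Longrightarrow> G T n \<rho> \<Longrightarrow> G T n (\<sigma> \<circ> \<rho>)"
  unfolding G_def by (metis comp_assoc)

lemma G_inv: "G T n \<sigma> \<Longrightarrow> \<rho> \<circ> \<sigma> = id \<Longrightarrow> G T n \<rho>"
  unfolding G_def by (metis comp_assoc comp_id)

definition R :: "nat \<Rightarrow> nat \<Rightarrow> nat" where "R n k = (if k \<le> n then n - k else k)"

abbreviation s :: "nat \<Rightarrow> nat \<Rightarrow> nat" where "s j \<equiv> Transposition.transpose j (Suc j)"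

lemma RR: "R n \<circ> R n = id"
  by (auto simp: fun_eq_iff R_def)

lemma ss: "s j \<circ> s j = id"
  by (auto simp: fun_eq_iff Transposition.transpose_def)

lemma map_R: "map (R n) [0..<n+1] = rev [0..<n+1]"
  by (rule nth_equalityI) (auto simp: R_def rev_nth simp del: upt_Suc)

lemma map_s: "j < n \<Longrightarrow> map (s j) [0..<n+1] = [0..<j] @ Suc j # j # [j+2..<n+1]"
proof -
  assume j: "j < n"
  have L: "[0..<n+1] = [0..<j] @ j # Suc j # [j+2..<n+1]"
  proof -
    have "[0..<n+1] = [0..<j] @ [j..<j+(n+1-j)]" using j upt_add_eq_append[of 0 j "n+1-j"] by simp
    also have "[j..<j+(n+1-j)] = [j..<n+1]" using j by simp
    also have "[j..<n+1] = j # [Suc j..<n+1]" using j by (intro upt_conv_Cons) auto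
    also have "[Suc j..<n+1] = Suc j # [j+2..<n+1]" using j by (simp add: upt_conv_Cons)
    finally show ?thesis .
  qed
  have a: "map (s j) [0..<j] = [0..<j]" by (auto intro!: map_idI simp: Transposition.transpose_def)
  have b: "map (s j) [j+2..<n+1] = [j+2..<n+1]" by (auto intro!: map_idI simp: Transposition.transpose_def)
  show ?thesis by (subst L) (simp only: map_append list.map a b transpose_apply_first transpose_apply_second)
qed

declare upt_Suc[simp del]

lemma H_list:
  fixes zs :: "'a::semigroup_mult list"
  assumes H: "\<forall>x :: nat \<Rightarrow> 'a. lprod (map x [0..<n]) = lprod (map x (rev [0..<n]))"
    and "length zs = n"
  shows "lprod zs = lprod (rev zs)"
proof -
  have "lprod (map ((!) zs) [0..<length zs]) = lprod (map ((!) zs) (rev [0..<length zs]))"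
    using H[rule_format, of "(!) zs"] assms(2) by simp
  then show ?thesis by (simp only: map_nth rev_map[symmetric])
qed

lemma G_gen:
  assumes H: "\<forall>x :: nat \<Rightarrow> 'a::semigroup_mult. lprod (map x [0..<n]) = lprod (map x (rev [0..<n]))"
    and j: "j < n"
  shows "G TYPE('a) n (s j \<circ> R n)"
  unfolding G_def
proof
  fix x :: "nat \<Rightarrow> 'a"
  define xs where "xs = map x [0..<j]"
  define ys where "ys = map x [j+2..<n+1]"
  have L: "[0..<n+1] = [0..<j] @ j # Suc j # [j+2..<n+1]"
  proof -
    have "[0..<n+1] = [0..<j] @ [j..<j+(n+1-j)]" using j upt_add_eq_append[of 0 j "n+1-j"] by simp
    also have "[j..<j+(n+1-j)] = [j..<n+1]" using j by simp
    also have "[j..<n+1] = j # [Suc j..<n+1]" using j by (intro upt_conv_Cons) auto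
    also have "[Suc j..<n+1] = Suc j # [j+2..<n+1]" using j by (simp add: upt_conv_Cons)
    finally show ?thesis .
  qed
  have 1: "map x [0..<n+1] = xs @ x j # x (Suc j) # ys" by (subst L) (simp add: xs_def ys_def)
  have len: "length (xs @ (x j * x (Suc j)) # ys) = n" using j by (auto simp: xs_def ys_def)
  have 2: "map (x \<circ> (s j \<circ> R n)) [0..<n+1] = rev ys @ x j # x (Suc j) # rev xs"
  proof -
    have "map (x \<circ> (s j \<circ> R n)) [0..<n+1] = map (x \<circ> s j) (map (R n) [0..<n+1])"
      by (simp only: map_map comp_assoc)
    also have "\<dots> = rev (map x (map (s j) [0..<n+1]))" by (subst map_R) (simp add: rev_map map_map)
    also have "\<dots> = rev ys @ x j # x (Suc j) # rev xs"
      by (simp only: map_s[OF j]) (simp add: xs_def ys_def)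
    finally show ?thesis .
  qed
  have "lprod (map x [0..<n+1]) = lprod (xs @ (x j * x (Suc j)) # ys)"
    by (simp only: 1 lprod_merge)
  also have "\<dots> = lprod (rev (xs @ (x j * x (Suc j)) # ys))"
    by (rule H_list[OF H len])
  also have "\<dots> = lprod (rev ys @ (x j * x (Suc j)) # rev xs)" by simp
  also have "\<dots> = lprod (map (x \<circ> (s j \<circ> R n)) [0..<n+1])" by (simp only: 2 lprod_merge)
  finally show "lprod (map x [0..<n+1]) = lprod (map (x \<circ> (s j \<circ> R n)) [0..<n+1])" .
qed

lemma G_adj:
  assumes H: "\<forall>x :: nat \<Rightarrow> 'a::semigroup_mult. lprod (map x [0..<n]) = lprod (map x (rev [0..<n]))"
    and "j < n" "k < n"
  shows "G TYPE('a) n (s j \<circ> s k)"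
proof -
  have a: "G TYPE('a) n (s j \<circ> R n)" using G_gen[OF H assms(2)] .
  have "(R n \<circ> s k) \<circ> (s k \<circ> R n) = id"
    by (metis RR ss comp_assoc comp_id)
  hence b: "G TYPE('a) n (R n \<circ> s k)" using G_inv G_gen[OF H assms(3)] by blast
  have "s j \<circ> s k = (s j \<circ> R n) \<circ> (R n \<circ> s k)" by (metis RR comp_assoc comp_id)
  thus ?thesis using G_comp[OF a b] by simp
qed

lemma G_odd:
  assumes H: "\<forall>x :: nat \<Rightarrow> 'a::semigroup_mult. lprod (map x [0..<n]) = lprod (map x (rev [0..<n]))"
  shows "a + 1 + d \<le> n \<Longrightarrow> \<forall>i<n. G TYPE('a) n (s i \<circ> Transposition.transpose a (a + 1 + d))"
proof (induction d)
  case 0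
  then have an: "a < n" by simp
  have e: "a + 1 + 0 = Suc a" by simp
  show ?case unfolding e by (intro allI impI G_adj[OF H] an)
next
  case (Suc d)
  define b where "b = a + 1 + d"
  have bn: "b < n" using Suc.prems b_def by simp
  have IH: "\<forall>i<n. G TYPE('a) n (s i \<circ> Transposition.transpose a b)"
    unfolding b_def by (rule Suc.IH) (use Suc.prems in simp)
  have e: "Transposition.transpose a (Suc b) = s b \<circ> Transposition.transpose a b \<circ> s b"
    using b_def by (auto simp: fun_eq_iff Transposition.transpose_def)
  have inv: "(Transposition.transpose a b \<circ> s b) \<circ> (s b \<circ> Transposition.transpose a b) = id"
    by (auto simp: fun_eq_iff Transposition.transpose_def)
  have g: "G TYPE('a) n (Transposition.transpose a b \<circ> s b)"
    using G_inv[OF _ inv] IH bn by blast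
  show ?case
  proof (intro allI impI)
    fix i assume i: "i < n"
    have "s i \<circ> Transposition.transpose a (Suc b) = (s i \<circ> s b) \<circ> (Transposition.transpose a b \<circ> s b)"
      by (simp add: e comp_assoc)
    moreover have "G TYPE('a) n (s i \<circ> s b)" using G_adj[OF H i bn] .
    ultimately show "G TYPE('a) n (s i \<circ> Transposition.transpose a (a + 1 + Suc d))"
      using G_comp g b_def by simp
  qed
qed

lemma G_swap:
  assumes H: "\<forall>x :: nat \<Rightarrow> 'a::semigroup_mult. lprod (map x [0..<n]) = lprod (map x (rev [0..<n]))"
    and "a \<le> n" "b \<le> n" "a \<noteq> b" "i < n"
  shows "G TYPE('a) n (s i \<circ> Transposition.transpose a b)"
proof (cases "a < b")
  case True
  define d where "d = b - a - 1"
  have "b = a + 1 + d" using True d_def by simp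
  then show ?thesis using G_odd[OF H, of a d] assms by simp
next
  case False
  define d where "d = a - b - 1"
  have d: "a = b + 1 + d" using False assms(4) d_def by simp
  have "Transposition.transpose a b = Transposition.transpose b a"
    by (auto simp: fun_eq_iff Transposition.transpose_def)
  then show ?thesis using G_odd[OF H, of b d] assms d by simp
qed

theorem lemma3p2:
  fixes smult :: "'k::field \<Rightarrow> 'a::ring \<Rightarrow> 'a" and n :: nat
  assumes "algebra_over smult"
    and "\<forall>x :: nat \<Rightarrow> 'a. lprod (map x [0..<n]) = lprod (map x (rev [0..<n]))"
    and "\<tau> permutes {0..<n+1}" and "evenperm \<tau>"
  shows "\<forall>x :: nat \<Rightarrow> 'a. lprod (map x [0..<n+1]) = lprod (map (x \<circ> \<tau>) [0..<n+1])"
proof -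
  note H = assms(2)
  have main: "(evenperm p \<longrightarrow> G TYPE('a) n p) \<and> (\<not> evenperm p \<longrightarrow> (\<forall>i<n. G TYPE('a) n (s i \<circ> p)))"
    if "p permutes {0..<n+1}" for p
    using that finite_atLeastLessThan
  proof (induction rule: permutes_induct)
    case id
    then show ?case unfolding G_def by (simp add: evenperm_id comp_def)
  next
    case (swap a b p)
    let ?t = "Transposition.transpose a b"
    have pp: "permutation p" using swap.hyps(4) permutation_permutes by blast
    have par: "evenperm (?t \<circ> p) = (\<not> evenperm p)"
    proof -
      have t: "\<not> evenperm ?t" using evenperm_swap[of a b] swap.hyps(3) by simp
      show ?thesis using evenperm_comp[OF permutation_swap_id pp, of a b] t by blast
    qed
    have ab: "a \<le> n" "b \<le> n" using swap.hyps(1,2) by auto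
    have n1: "0 < n" using ab swap.hyps(3) by auto
    show ?case
    proof (cases "evenperm p")
      case True
      then have Gp: "G TYPE('a) n p" using swap.IH by blast
      have "\<forall>i<n. G TYPE('a) n (s i \<circ> (?t \<circ> p))"
        using G_comp[OF G_swap[OF H ab swap.hyps(3)] Gp] by (simp add: comp_assoc)
      then show ?thesis using par True by blast
    next
      case False
      then have G0: "G TYPE('a) n (s 0 \<circ> p)" using swap.IH n1 by blast
      have inv: "(?t \<circ> s 0) \<circ> (s 0 \<circ> ?t) = id" by (auto simp: fun_eq_iff Transposition.transpose_def)
      have G1: "G TYPE('a) n (?t \<circ> s 0)" using G_inv[OF G_swap[OF H ab swap.hyps(3) n1] inv] .
      have "?t \<circ> p = (?t \<circ> s 0) \<circ> (s 0 \<circ> p)" by (auto simp: fun_eq_iff Transposition.transpose_def)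
      then have "G TYPE('a) n (?t \<circ> p)" using G_comp[OF G1 G0] by simp
      then show ?thesis using par False by blast
    qed
  qed
  have "G TYPE('a) n \<tau>" using main[OF assms(3)] assms(4) by simp
  then show ?thesis unfolding G_def by simp
qed

end
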